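(* Let $S_1$ and $S_2$ be two finite collections of nonvertical line segments in the plane with $|S_1\cup S_2|=n$, such that within each $S_i$ no two segments intersect. Then the number of intersection points between a segment of $S_1$ and a segment of $S_2$ that lie on an envelope (lower or upper) of $S_1$ and also on an envelope (lower or upper) of $S_2$ is $O(n)$.
   Context: For a finite collection $S$ of nonvertical segments (viewed as graphs of partial functions $\mathbb R\to\mathbb R$), the lower envelope is the pointwise minimum of these graphs (the parts visible from $y=-\infty$), and the upper envelope is the pointwise maximum (the parts visible from $y=+\infty$). *)

theory Defs
  imports "HOL-Analysis.Analysis"
begin

definition nonvertical_segment :: "(real \<times> real) set \<Rightarrow> bool" where
  "nonvertical_segment s \<longleftrightarrow> (\<exists>a b. fst a \<noteq> fst b \<and> s = closed_segment a b)"

definition on_lower_envelope :: "(real \<times> real) set set \<Rightarrow> real \<times> real \<Rightarrow> bool" where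
  "on_lower_envelope S p \<longleftrightarrow>
     (\<exists>s\<in>S. p \<in> s) \<and> (\<forall>s\<in>S. \<forall>q\<in>s. fst q = fst p \<longrightarrow> snd p \<le> snd q)"

definition on_upper_envelope :: "(real \<times> real) set set \<Rightarrow> real \<times> real \<Rightarrow> bool" where
  "on_upper_envelope S p \<longleftrightarrow>
     (\<exists>s\<in>S. p \<in> s) \<and> (\<forall>s\<in>S. \<forall>q\<in>s. fst q = fst p \<longrightarrow> snd q \<le> snd p)"

definition on_envelope :: "(real \<times> real) set set \<Rightarrow> real \<times> real \<Rightarrow> bool" where
  "on_envelope S p \<longleftrightarrow> on_lower_envelope S p \<or> on_upper_envelope S p"

definition bichromatic_points ::
  "(real \<times> real) set set \<Rightarrow> (real \<times> real) set set \<Rightarrow> (real \<times> real) set" where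
  "bichromatic_points S1 S2 = {p. \<exists>s1\<in>S1. \<exists>s2\<in>S2. s1 \<inter> s2 = {p}}"

end

theory Submission
  imports Defs
begin

lemma seg_good:
  assumes "nonvertical_segment s"
  shows "convex s \<and> fst ` s = {Inf (fst ` s)..Sup (fst ` s)}"
proof -
  obtain a b where s: "s = closed_segment a b" using assms unfolding nonvertical_segment_def by blast
  have "fst ` s = closed_segment (fst a) (fst b)"
    unfolding s by (rule closed_segment_linear_image[OF linear_fst, symmetric])
  also have "\<dots> = {min (fst a) (fst b) .. max (fst a) (fst b)}"
    by (simp add: closed_segment_eq_real_ivl)
  finally have e: "fst ` s = {min (fst a) (fst b) .. max (fst a) (fst b)}" .
  show ?thesis using s e by simp
qed

lemma cross:
  fixes p p' q q' :: "real \<times> real"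
  assumes "convex s" "convex t" "p \<in> s" "p' \<in> s" "q' \<in> t" "q \<in> t"
    "fst p = fst q'" "fst p' = fst q" "(snd q' - snd p) * (snd q - snd p') \<le> 0"
  shows "s \<inter> t \<noteq> {}"
proof -
  define d0 where "d0 = snd q' - snd p"
  define d1 where "d1 = snd q - snd p'"
  have pr: "d0 * d1 \<le> 0" using assms(9) d0_def d1_def by simp
  show ?thesis
  proof (cases "d0 = d1")
    case True
    then have "d0 * d0 \<le> 0" using pr by simp
    then have "d0 = 0" using mult_le_0_iff[of d0 d0] by auto
    then have "q' = p" using assms(7) d0_def by (simp add: prod_eq_iff)
    thus ?thesis using assms by blast
  next
    case False
    define l where "l = d0 / (d0 - d1)"
    have sg: "(0 \<le> d0 \<and> d1 \<le> 0) \<or> (d0 \<le> 0 \<and> 0 \<le> d1)" using pr by (simp add: mult_le_0_iff)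
    have l0: "0 \<le> l" and l1: "l \<le> 1"
      using sg False unfolding l_def by (auto simp: divide_simps)
    have ld: "l * (d0 - d1) = d0" using False unfolding l_def by simp
    define z where "z = (1 - l) *\<^sub>R p + l *\<^sub>R p'"
    have zs: "z \<in> s"
    proof -
      have "z \<in> closed_segment p p'" unfolding z_def closed_segment_def using l0 l1 by auto
      thus ?thesis using closed_segment_subset[OF assms(3,4,1)] by blast
    qed
    have zt': "(1 - l) *\<^sub>R q' + l *\<^sub>R q \<in> t"
    proof -
      have "(1 - l) *\<^sub>R q' + l *\<^sub>R q \<in> closed_segment q' q" unfolding closed_segment_def using l0 l1 by auto
      thus ?thesis using closed_segment_subset[OF assms(5,6,2)] by blast
    qed
    have "z = (1 - l) *\<^sub>R q' + l *\<^sub>R q"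
    proof -
      have "(1 - l) * snd p + l * snd p' = (1 - l) * snd q' + l * snd q"
        using ld unfolding d0_def d1_def by (simp add: algebra_simps)
      thus ?thesis unfolding z_def using assms(7,8) by (simp add: prod_eq_iff)
    qed
    thus ?thesis using zs zt' by blast
  qed
qed

theorem lemma1:
  "\<exists>C::real. \<forall>S1 S2 :: (real \<times> real) set set.
     finite S1 \<and> finite S2 \<and>
     (\<forall>s\<in>S1 \<union> S2. nonvertical_segment s) \<and>
     pairwise disjnt S1 \<and> pairwise disjnt S2 \<longrightarrow>
     real (card {p \<in> bichromatic_points S1 S2. on_envelope S1 p \<and> on_envelope S2 p})
       \<le> C * real (card (S1 \<union> S2))"
proof (rule exI[of _ 12], intro allI impI, elim conjE)
  fix S1 S2 :: "(real \<times> real) set set"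
  assume fin1: "finite S1" and fin2: "finite S2" and nv: "\<forall>s\<in>S1 \<union> S2. nonvertical_segment s"
    and pw1: "pairwise disjnt S1" and pw2: "pairwise disjnt S2"
  define S where "S = S1 \<union> S2"
  have finS: "finite S" using fin1 fin2 S_def by simp
  define X where "X = (\<lambda>s. Inf (fst ` s)) ` S \<union> (\<lambda>s. Sup (fst ` s)) ` S"
  have finX: "finite X" using finS X_def by simp
  have cardX: "card X \<le> 2 * card S"
  proof -
    have "card X \<le> card ((\<lambda>s. Inf (fst ` s)) ` S) + card ((\<lambda>s. Sup (fst ` s)) ` S)"
      unfolding X_def by (rule card_Un_le)
    also have "\<dots> \<le> card S + card S" by (intro add_mono card_image_le finS)
    finally show ?thesis by simp
  qed
  have good: "\<And>s. s \<in> S \<Longrightarrow> convex s \<and> fst ` s = {Inf (fst ` s)..Sup (fst ` s)}"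
    using nv seg_good S_def by blast
  have InfX: "\<And>s. s \<in> S \<Longrightarrow> Inf (fst ` s) \<in> X" and SupX: "\<And>s. s \<in> S \<Longrightarrow> Sup (fst ` s) \<in> X"
    unfolding X_def by auto
  have cover: "\<exists>p'\<in>s. fst p' = x"
    if "s \<in> S" "p \<in> s" "\<forall>z\<in>X. \<not> (min (fst p) x \<le> z \<and> z \<le> max (fst p) x)" for s p x
  proof -
    have g: "fst ` s = {Inf (fst ` s)..Sup (fst ` s)}" using good that(1) by blast
    have "fst p \<in> fst ` s" using that(2) by blast
    then have pm: "Inf (fst ` s) \<le> fst p" "fst p \<le> Sup (fst ` s)" using g by auto
    have "\<not> (min (fst p) x \<le> Inf (fst ` s) \<and> Inf (fst ` s) \<le> max (fst p) x)"
      using that(3) InfX[OF that(1)] by blast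
    moreover have "\<not> (min (fst p) x \<le> Sup (fst ` s) \<and> Sup (fst ` s) \<le> max (fst p) x)"
      using that(3) SupX[OF that(1)] by blast
    ultimately have "\<not> min (fst p) x \<le> Inf (fst ` s)" "\<not> Sup (fst ` s) \<le> max (fst p) x"
      using pm max.coboundedI1 min.coboundedI1 by (metis order_trans)+
    then have "x \<in> {Inf (fst ` s)..Sup (fst ` s)}" by (simp add: not_le min_less_iff_disj less_max_iff_disj)
    then have "x \<in> fst ` s" using g by simp
    thus ?thesis by force
  qed
  have same: "s = t"
    if T: "T \<subseteq> S" "pairwise disjnt T" "s \<in> T" "t \<in> T" "p \<in> s" "q \<in> t"
      "\<forall>z\<in>X. \<not> (min (fst p) (fst q) \<le> z \<and> z \<le> max (fst p) (fst q))"
      "(on_lower_envelope T p \<and> on_lower_envelope T q) \<or> (on_upper_envelope T p \<and> on_upper_envelope T q)"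
    for T s t p q
  proof (rule ccontr)
    assume ne: "s \<noteq> t"
    have sS: "s \<in> S" and tS: "t \<in> S" using T by auto
    obtain p' where p': "p' \<in> s" "fst p' = fst q" using cover[OF sS T(5) T(7)] by blast
    have "\<forall>z\<in>X. \<not> (min (fst q) (fst p) \<le> z \<and> z \<le> max (fst q) (fst p))"
      using T(7) by (simp add: min.commute max.commute)
    then obtain q' where q': "q' \<in> t" "fst q' = fst p" using cover[OF tS T(6)] by blast
    have "(snd q' - snd p) * (snd q - snd p') \<le> 0"
      using T(8)
    proof
      assume "on_lower_envelope T p \<and> on_lower_envelope T q"
      then have "snd p \<le> snd q'" "snd q \<le> snd p'"
        using q' p' T(3,4) unfolding on_lower_envelope_def by auto
      thus ?thesis by (intro mult_nonneg_nonpos) auto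
    next
      assume "on_upper_envelope T p \<and> on_upper_envelope T q"
      then have "snd q' \<le> snd p" "snd p' \<le> snd q"
        using q' p' T(3,4) unfolding on_upper_envelope_def by auto
      thus ?thesis by (intro mult_nonpos_nonneg) auto
    qed
    then have "s \<inter> t \<noteq> {}"
      using cross[OF _ _ T(5) p'(1) q'(1) T(6) q'(2)[symmetric] p'(2)] good sS tS by blast
    moreover have "disjnt s t" using T(2,3,4) ne unfolding pairwise_def by blast
    ultimately show False unfolding disjnt_def by blast
  qed
  define P where "P = {p \<in> bichromatic_points S1 S2. on_envelope S1 p \<and> on_envelope S2 p}"
  have segs: "\<exists>s1\<in>S1. \<exists>s2\<in>S2. s1 \<inter> s2 = {p}" if "p \<in> P" for p
    using that unfolding P_def bichromatic_points_def by blast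
  have env1: "on_lower_envelope S1 p \<or> on_upper_envelope S1 p" if "p \<in> P" for p
    using that unfolding P_def on_envelope_def by blast
  have env2: "on_lower_envelope S2 p \<or> on_upper_envelope S2 p" if "p \<in> P" for p
    using that unfolding P_def on_envelope_def by blast
  define A where "A = {p \<in> P. fst p \<in> X}"
  define B where "B = {p \<in> P. fst p \<notin> X}"
  have PAB: "P = A \<union> B" unfolding A_def B_def by auto
  have cardA: "card A \<le> 2 * card X"
  proof -
    have "inj_on (\<lambda>p. (fst p, on_lower_envelope S1 p)) A"
    proof (rule inj_onI)
      fix p q assume pA: "p \<in> A" and qA: "q \<in> A"
        and eq: "(fst p, on_lower_envelope S1 p) = (fst q, on_lower_envelope S1 q)"
      have e1: "on_lower_envelope S1 p \<or> on_upper_envelope S1 p"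
        "on_lower_envelope S1 q \<or> on_upper_envelope S1 q" using env1 pA qA A_def by auto
      have "snd p = snd q"
      proof (cases "on_lower_envelope S1 p")
        case True
        then have "on_lower_envelope S1 q" using eq by simp
        moreover obtain sq where "sq \<in> S1" "q \<in> sq" using \<open>on_lower_envelope S1 q\<close> unfolding on_lower_envelope_def by blast
        moreover obtain sp where "sp \<in> S1" "p \<in> sp" using True unfolding on_lower_envelope_def by blast
        moreover have "fst p = fst q" using eq by simp
        ultimately have "snd p \<le> snd q" "snd q \<le> snd p" using True unfolding on_lower_envelope_def by auto
        then show ?thesis by simp
      next
        case False
        then have "on_upper_envelope S1 p" "on_upper_envelope S1 q" using eq e1 by auto
        moreover obtain sq where "sq \<in> S1" "q \<in> sq" using \<open>on_upper_envelope S1 q\<close> unfolding on_upper_envelope_def by blast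
        moreover obtain sp where "sp \<in> S1" "p \<in> sp" using \<open>on_upper_envelope S1 p\<close> unfolding on_upper_envelope_def by blast
        moreover have "fst p = fst q" using eq by simp
        ultimately have "snd p \<le> snd q" "snd q \<le> snd p" unfolding on_upper_envelope_def by auto
        then show ?thesis by simp
      qed
      then show "p = q" using eq by (simp add: prod_eq_iff)
    qed
    moreover have "(\<lambda>p. (fst p, on_lower_envelope S1 p)) ` A \<subseteq> X \<times> (UNIV :: bool set)"
      unfolding A_def by auto
    ultimately have "card A \<le> card (X \<times> (UNIV :: bool set))"
      using finX by (intro card_inj_on_le) auto
    also have "\<dots> = 2 * card X" by (simp add: card_cartesian_product)
    finally show ?thesis .
  qed
  define nxt where "nxt p = Min {z \<in> X. fst p < z}" for p :: "real \<times> real"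
  have nxt: "nxt p \<in> X \<and> fst p < nxt p \<and> (\<forall>z\<in>X. fst p < z \<longrightarrow> nxt p \<le> z)" if "p \<in> B" for p
  proof -
    have pP: "p \<in> P" and px: "fst p \<notin> X" using that B_def by auto
    obtain s1 s2 where s: "s1 \<in> S1" "s2 \<in> S2" "s1 \<inter> s2 = {p}" using segs[OF pP] by blast
    have s1S: "s1 \<in> S" using s S_def by blast
    have "p \<in> s1" using s by blast
    then have "fst p \<le> Sup (fst ` s1)" using good[OF s1S] by force
    moreover have "Sup (fst ` s1) \<in> X" using SupX[OF s1S] .
    ultimately have "Sup (fst ` s1) \<in> {z \<in> X. fst p < z}" using px
      by (metis (mono_tags, lifting) mem_Collect_eq order_le_less)
    then have ne: "{z \<in> X. fst p < z} \<noteq> {}" by blast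
    have fin: "finite {z \<in> X. fst p < z}" using finX by simp
    have "nxt p \<in> {z \<in> X. fst p < z}" unfolding nxt_def using Min_in[OF fin ne] .
    moreover have "\<forall>z\<in>X. fst p < z \<longrightarrow> nxt p \<le> z" unfolding nxt_def using fin by auto
    ultimately show ?thesis by blast
  qed
  have cardB: "card B \<le> 4 * card X"
  proof -
    let ?k = "\<lambda>p. (nxt p, on_lower_envelope S1 p, on_lower_envelope S2 p)"
    have "inj_on ?k B"
    proof (rule inj_onI)
      fix p q assume pB: "p \<in> B" and qB: "q \<in> B" and eq: "?k p = ?k q"
      have pP: "p \<in> P" and qP: "q \<in> P" and px: "fst p \<notin> X" and qx: "fst q \<notin> X"
        using pB qB B_def by auto
      have np: "nxt p = nxt q" using eq by simp
      have nox: "\<forall>z\<in>X. \<not> (min (fst p) (fst q) \<le> z \<and> z \<le> max (fst p) (fst q))"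
      proof (intro ballI notI)
        fix z assume zX: "z \<in> X" and zin: "min (fst p) (fst q) \<le> z \<and> z \<le> max (fst p) (fst q)"
        have "z \<noteq> fst p" "z \<noteq> fst q" using zX px qx by auto
        moreover have "fst p < z \<longrightarrow> nxt p \<le> z" "fst q < z \<longrightarrow> nxt q \<le> z"
          "fst p < nxt p" "fst q < nxt q" using nxt[OF pB] nxt[OF qB] zX by auto
        ultimately show False using zin np
          by (cases "fst p \<le> fst q") (auto simp: min_def max_def)
      qed
      obtain s1 s2 where s: "s1 \<in> S1" "s2 \<in> S2" "s1 \<inter> s2 = {p}" using segs[OF pP] by blast
      obtain t1 t2 where t: "t1 \<in> S1" "t2 \<in> S2" "t1 \<inter> t2 = {q}" using segs[OF qP] by blast
      have c1: "(on_lower_envelope S1 p \<and> on_lower_envelope S1 q) \<or> (on_upper_envelope S1 p \<and> on_upper_envelope S1 q)"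
        using eq env1[OF pP] env1[OF qP] by (simp only: prod.inject) blast
      have c2: "(on_lower_envelope S2 p \<and> on_lower_envelope S2 q) \<or> (on_upper_envelope S2 p \<and> on_upper_envelope S2 q)"
        using eq env2[OF pP] env2[OF qP] by (simp only: prod.inject) blast
      have ps: "p \<in> s1" "p \<in> s2" "q \<in> t1" "q \<in> t2" using s(3) t(3) by blast+
      have "S1 \<subseteq> S" "S2 \<subseteq> S" unfolding S_def by blast+
      have "s1 = t1" using same[OF \<open>S1 \<subseteq> S\<close> pw1 s(1) t(1) ps(1) ps(3) nox c1] .
      moreover have "s2 = t2" using same[OF \<open>S2 \<subseteq> S\<close> pw2 s(2) t(2) ps(2) ps(4) nox c2] .
      ultimately show "p = q" using s t by blast
    qed
    moreover have "?k ` B \<subseteq> X \<times> (UNIV :: bool set) \<times> (UNIV :: bool set)"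
      using nxt by auto
    ultimately have "card B \<le> card (X \<times> (UNIV :: bool set) \<times> (UNIV :: bool set))"
      using finX by (intro card_inj_on_le) auto
    also have "\<dots> = 4 * card X" by (simp add: card_cartesian_product)
    finally show ?thesis .
  qed
  have "card P \<le> card A + card B" unfolding PAB by (rule card_Un_le)
  also have "\<dots> \<le> 12 * card S" using cardA cardB cardX by linarith
  finally have "card P \<le> 12 * card S" .
  then show "real (card {p \<in> bichromatic_points S1 S2. on_envelope S1 p \<and> on_envelope S2 p})
       \<le> 12 * real (card (S1 \<union> S2))"
    unfolding P_def S_def by (metis of_nat_le_iff of_nat_mult of_nat_numeral)
qed

end
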